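(* Let $\gamma$ be Euler's constant, and define $a_1=1/2$ and, for $j\ge2$, $a_j=\dfrac{\nu(j-1)}{2j(2j-1)(2j-2)}$. Then for every integer $N\ge2$, $$\gamma-\sum_{j=1}^N a_j<\frac{2+\nu(N-1)+1/(N-1)}{16(N-1)^2}.$$
   Context: $\gamma=\lim_{n\to\infty}\left(-\ln n+\sum_{i=1}^n 1/i\right)$ is Euler's constant. For a positive integer $t$, $\nu(t)$ denotes the number of digits in the binary expansion of $t$, i.e. $\nu(t)=\lfloor\log_2 t\rfloor+1$. *)

theory Defs
  imports "HOL-Analysis.Analysis"
begin

text \<open>Number of binary digits of a positive integer t: nu t = floor(log2 t) + 1.\<close>
definition nu :: "nat \<Rightarrow> int" where
  "nu t = \<lfloor>log 2 (real t)\<rfloor> + 1"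

definition a_seq :: "nat \<Rightarrow> real" where
  "a_seq j = (if j = 1 then 1/2
              else of_int (nu (j - 1)) / (2 * real j * (2 * real j - 1) * (2 * real j - 2)))"

end

theory Submission
  imports Defs "HOL-Real_Asymp.Real_Asymp"
begin

definition ee :: "nat \<Rightarrow> real" where
  "ee n = harm (2*n) - harm n + 1/(4*real n) - ln 2"

lemma rat_id:
  fixes x :: real assumes "x \<ge> 1"
  shows "-(1/(2*x+1)) - 1/(2*x+2) + 1/(x+1) + 1/(4*x) - 1/(4*(x+1)) = 1/(4*x*(x+1)*(2*x+1))"
proof -
  have "x \<noteq> 0" "2*x+1 \<noteq> 0" "2*x+2\<noteq>0" "x+1\<noteq>0" using assms by auto
  thus ?thesis by (simp add: divide_simps) algebra
qed

lemma ee_step: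
  assumes "n \<ge> 1"
  shows "ee n - ee (Suc n) = 1/(4*real n*(real n+1)*(2*real n+1))"
proof -
  have h: "harm (2*Suc n) = harm (2*n) + 1/(2*real n+1) + 1/(2*real n+2)"
    by (simp add: harm_Suc field_simps)
  have h2: "harm (Suc n) = harm n + 1/(real n+1)"
    by (simp add: harm_Suc field_simps)
  have "ee n - ee (Suc n) = -(1/(2*real n+1)) - 1/(2*real n+2) + 1/(real n+1) + 1/(4*real n) - 1/(4*(real n+1))"
    unfolding ee_def h h2 by simp
  also have "\<dots> = 1/(4*real n*(real n+1)*(2*real n+1))"
    using assms by (intro rat_id) simp
  finally show ?thesis .
qed

lemma ee_lim: "ee \<longlonglongrightarrow> 0"
proof -
  have a: "(\<lambda>n. harm (2*n) - ln (real (2*n))) \<longlonglongrightarrow> euler_mascheroni"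
  proof -
    have "strict_mono (\<lambda>n::nat. 2*n)" by (auto intro: strict_monoI)
    from LIMSEQ_subseq_LIMSEQ[OF euler_mascheroni_LIMSEQ this] show ?thesis by (simp add: o_def)
  qed
  have b: "(\<lambda>n. 1/(4*real n)) \<longlonglongrightarrow> 0"
    by real_asymp
  have "(\<lambda>n. (harm (2*n) - ln (real (2*n))) - (harm n - ln (real n)) + 1/(4*real n)) \<longlonglongrightarrow> euler_mascheroni - euler_mascheroni + 0"
    by (intro tendsto_intros a b euler_mascheroni_LIMSEQ)
  hence c: "(\<lambda>n. (harm (2*n) - ln (real (2*n))) - (harm n - ln (real n)) + 1/(4*real n)) \<longlonglongrightarrow> 0" by simp
  show ?thesis
  proof (rule Lim_transform_eventually[OF c], rule eventually_sequentiallyI[of 1])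
    fix m :: nat assume "m \<ge> 1"
    define n where "n = m - 1"
    have m: "m = n+1" using \<open>m \<ge> 1\<close> n_def by simp
    have "ln (2 * real (n+1)) = ln 2 + ln (real (n+1))"
      using ln_mult[of 2 "real (n+1)"] by simp
    hence "ln (real (2*(n+1))) = ln 2 + ln (real (n+1))" by simp
    hence "harm (2 * (n+1)) - ln (real (2 * (n+1))) - (harm (n+1) - ln (real (n+1))) + 1 / (4 * real (n+1)) = ee (n+1)"
      unfolding ee_def by simp
    thus "harm (2 * m) - ln (real (2 * m)) - (harm m - ln (real m)) + 1 / (4 * real m) = ee m"
      using m by simp
  qed
qed

lemma ee_bound:
  assumes "n \<ge> 1" shows "ee n < 1/(16*real n^2)"
proof -
  define u where "u n = 1/(16*real n^2) - ee n" for n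
  have dec: "u (Suc n) < u n" if "n \<ge> 1" for n
  proof -
    have x: "real n \<ge> 1" using that by simp
    have "u n - u (Suc n) = 1/(16*real n^2) - 1/(16*(real n+1)^2) - 1/(4*real n*(real n+1)*(2*real n+1))"
      unfolding u_def using ee_step[OF that] by (simp add: algebra_simps)
    also have "\<dots> > 0"
    proof -
      define x where "x = real n"
      have "x \<ge> 1" using x x_def by simp
      hence p: "x > 0" "x+1>0" "2*x+1>0" by auto
      have "1/(16*x^2) - 1/(16*(x+1)^2) - 1/(4*x*(x+1)*(2*x+1)) = 1/(16*x^2*(x+1)^2*(2*x+1))"
        using p by (simp add: divide_simps) algebra
      also have "\<dots> > 0" using p by simp
      finally show ?thesis unfolding x_def .
    qed
    finally show ?thesis by simp
  qed
  have ulim: "u \<longlonglongrightarrow> 0"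
  proof -
    have "(\<lambda>n. 1/(16*real n^2)) \<longlonglongrightarrow> 0" by real_asymp
    from tendsto_diff[OF this ee_lim] show ?thesis unfolding u_def by simp
  qed
  have "decseq (\<lambda>k. u (k + Suc n))"
    by (rule decseq_SucI) (use dec assms in \<open>auto intro: less_imp_le\<close>)
  from decseq_ge[OF this LIMSEQ_ignore_initial_segment[OF ulim]] have "0 \<le> u (0 + Suc n)" .
  with dec[OF assms] have "u n > 0" by simp
  thus ?thesis unfolding u_def by simp
qed

lemma ee_partial:
  "(\<Sum>k<K. ee (2^k)) = harm (2^K) - real K * ln 2 - 1/2 - 1/2^(K+1)"
proof (induction K)
  case 0 thus ?case by (simp add: harm_def)
next
  case (Suc K)
  have "(2::nat) * 2^K = 2^(Suc K)" by simp
  thus ?case using Suc by (simp add: ee_def algebra_simps)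
qed

lemma ee_sums: "(\<lambda>k. ee (2^k)) sums (euler_mascheroni - 1/2)"
proof -
  have "strict_mono (\<lambda>k::nat. (2::nat)^k)" by (auto intro: strict_monoI)
  from LIMSEQ_subseq_LIMSEQ[OF euler_mascheroni_LIMSEQ this]
  have a: "(\<lambda>K. harm (2^K) - ln (real (2^K))) \<longlonglongrightarrow> euler_mascheroni" by (simp add: o_def)
  have b: "(\<lambda>K::nat. 1/(2::real)^(K+1)) \<longlonglongrightarrow> 0" by real_asymp
  have "(\<lambda>K. (harm (2^K) - ln (real (2^K))) - 1/2 - 1/(2::real)^(K+1)) \<longlonglongrightarrow> euler_mascheroni - 1/2 - 0"
    by (intro tendsto_intros a b)
  moreover have "ln (real (2^K)) = real K * ln 2" for K :: nat
    by (simp add: ln_realpow)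
  ultimately show ?thesis unfolding sums_def ee_partial by simp
qed

lemma nu_char:
  assumes "2^k \<le> m" "m < 2^(k+1)"
  shows "nu m = int k + 1"
proof -
  have "floor (log (real (2::nat)) (real m)) = int k"
    by (rule floor_log_nat_eq_if) (use assms in auto)
  thus ?thesis unfolding nu_def by simp
qed

lemma exists_k:
  assumes "m \<ge> 1" shows "\<exists>k. 2^k \<le> m \<and> m < (2::nat)^(k+1)"
  using assms
proof (induction m rule: nat_induct_at_least)
  case base thus ?case by (intro exI[of _ 0]) simp
next
  case (Suc m)
  then obtain k where k: "2^k \<le> m" "m < (2::nat)^(k+1)" by blast
  show ?case
  proof (cases "Suc m < 2^(k+1)")
    case True thus ?thesis using k by (intro exI[of _ k]) simp
  next
    case False
    hence "Suc m = 2^(k+1)" using k by simp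
    thus ?thesis by (intro exI[of _ "k+1"]) simp
  qed
qed

lemma a_seq_eq:
  assumes "m \<ge> 1"
  shows "a_seq (m+1) = of_int (nu m) * (ee m - ee (m+1))"
proof -
  have "a_seq (m+1) = of_int (nu m) / (2 * (real m + 1) * (2 * (real m+1) - 1) * (2 * (real m+1) - 2))"
    using assms unfolding a_seq_def by simp
  also have "(2 * (real m + 1) * (2 * (real m+1) - 1) * (2 * (real m+1) - 2)) = 4*real m*(real m+1)*(2*real m+1)"
    by (simp add: algebra_simps)
  also have "of_int (nu m) / \<dots> = of_int (nu m) * (1 / \<dots>)" by simp
  also have "1 / (4*real m*(real m+1)*(2*real m+1)) = ee m - ee (m+1)"
    using ee_step[OF assms] by simp
  finally show ?thesis .
qed

lemma partial_formula:
  assumes "m \<ge> 1"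
  shows "\<forall>k. 2^k \<le> m \<longrightarrow> m < 2^(k+1) \<longrightarrow>
     (\<Sum>j=1..m+1. a_seq j) = 1/2 + (\<Sum>i<k+1. ee (2^i)) - (real k + 1) * ee (m+1)"
  using assms
proof (induction m rule: nat_induct_at_least)
  case base
  show ?case
  proof (intro allI impI)
    fix k :: nat assume "2^k \<le> (1::nat)" "1 < (2::nat)^(k+1)"
    hence k0: "k = 0" using power_increasing[of 1 k "2::nat"] by (cases "k=0") auto
    have n1: "nu 1 = 1" using nu_char[of 0 1] by simp
    have "(\<Sum>j=1..1+1. a_seq j) = a_seq 1 + a_seq 2" by (simp add: numeral_2_eq_2)
    also have "a_seq 2 = ee 1 - ee 2" using a_seq_eq[of 1] n1 by (simp add: numeral_2_eq_2)
    also have "a_seq 1 = 1/2" by (simp add: a_seq_def)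
    finally show "(\<Sum>j=1..1+1. a_seq j) = 1/2 + (\<Sum>i<k+1. ee (2^i)) - (real k + 1) * ee (1+1)"
      using k0 by (simp add: numeral_2_eq_2)
  qed
next
  case (Suc m)
  show ?case
  proof (intro allI impI)
    fix k :: nat assume k: "2^k \<le> Suc m" "Suc m < (2::nat)^(k+1)"
    have nu: "nu (Suc m) = int k + 1" using nu_char[OF k] .
    have S: "(\<Sum>j=1..Suc m+1. a_seq j) = (\<Sum>j=1..m+1. a_seq j) + a_seq (Suc m + 1)"
      by simp
    have A: "a_seq (Suc m + 1) = (real k + 1) * (ee (Suc m) - ee (Suc m + 1))"
      using a_seq_eq[of "Suc m"] nu by simp
    show "(\<Sum>j=1..Suc m+1. a_seq j) = 1/2 + (\<Sum>i<k+1. ee (2^i)) - (real k + 1) * ee (Suc m+1)"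
    proof (cases "Suc m = 2^k")
      case True
      have "k \<ge> 1" using True Suc.hyps by (cases k) auto
      then obtain k' where k': "k = Suc k'" by (cases k) auto
      have "2^k' \<le> m" "m < 2^(k'+1)" using True k' Suc.hyps by auto
      with Suc.IH have IH: "(\<Sum>j=1..m+1. a_seq j) = 1/2 + (\<Sum>i<k. ee (2^i)) - real k * ee (m+1)"
        using k' by auto
      show ?thesis unfolding S A IH using True by (simp add: algebra_simps)
    next
      case False
      hence "2^k \<le> m" "m < 2^(k+1)" using k by auto
      with Suc.IH have IH: "(\<Sum>j=1..m+1. a_seq j) = 1/2 + (\<Sum>i<k+1. ee (2^i)) - (real k + 1) * ee (m+1)"
        by auto
      show ?thesis unfolding S A IH by (simp add: algebra_simps)
    qed
  qed
qed

lemma pow4: "((2::real)^n)^2 = 4^n"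
  by (induction n) (simp_all add: power2_eq_square algebra_simps)

theorem proposition1:
  fixes N :: nat
  assumes "N \<ge> 2"
  shows "euler_mascheroni - (\<Sum>j=1..N. a_seq j)
           < (2 + of_int (nu (N - 1)) + 1 / real (N - 1)) / (16 * (real N - 1)^2)"
proof -
  define m where "m = N - 1"
  have m1: "m \<ge> 1" and Nm: "N = m + 1" using assms m_def by auto
  obtain k where k: "2^k \<le> m" "m < (2::nat)^(k+1)" using exists_k[OF m1] by blast
  have nu: "nu (N - 1) = int k + 1" using nu_char[OF k] m_def by simp
  have S: "(\<Sum>j=1..N. a_seq j) = 1/2 + (\<Sum>i<k+1. ee (2^i)) - (real k + 1) * ee N"
    using partial_formula[OF m1] k Nm by auto
  define L where "L = k + 1"
  define R where "R = euler_mascheroni - 1/2 - (\<Sum>i<L. ee (2^i))"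
  have Rs: "(\<lambda>i. ee (2^(i+L))) sums R"
    using sums_split_initial_segment[OF ee_sums, of L] unfolding R_def by simp
  have Gs: "(\<lambda>i. (1/16) * (1/4)^L * (1/4::real)^i) sums ((1/16) * (1/4)^L * (1 / (1 - 1/4)))"
    by (intro sums_mult geometric_sums) simp
  have le: "ee (2^(i+L)) \<le> (1/16) * (1/4)^L * (1/4)^i" for i
  proof -
    have "(2::nat)^(i+L) \<ge> 1" by simp
    from ee_bound[OF this] have "ee (2^(i+L)) < 1/(16 * (real (2^(i+L)))^2)" .
    also have "1/(16 * (real (2^(i+L)))^2) = (1/16) * (1/4)^L * (1/4)^i"
      by (simp add: power_add power_mult_distrib pow4 power_divide)
    finally show ?thesis by simp
  qed
  have RL: "R \<le> (1/12) * (1/4)^L"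
    using sums_le[OF le Rs Gs] by simp
  have "N \<le> 2^L" using k Nm L_def by simp
  hence pL: "real N \<le> 2^L" using of_nat_le_iff[of N "2^L"] by simp
  define x where "x = real N"
  have x2: "x \<ge> 2" using assms x_def by simp
  have "(1/4::real)^L = 1 / (2^L)^2" by (simp add: power_divide pow4)
  also have "\<dots> \<le> 1 / x^2" using pL x2 x_def by (intro divide_left_mono power_mono) auto
  finally have R2: "R \<le> 1/(12 * x^2)" using RL by simp
  have eN: "ee N < 1/(16 * x^2)" using ee_bound[of N] assms x_def by simp
  have diff: "euler_mascheroni - (\<Sum>j=1..N. a_seq j) = R + (real k + 1) * ee N"
    unfolding S R_def L_def by simp
  have xm: "real N - 1 = x - 1" "real (N - 1) = x - 1" using assms x_def by auto
  have y: "x - 1 \<ge> 1" using x2 by simp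
  have sq: "(x-1)^2 \<le> x^2" using y by (intro power_mono) auto
  have y2: "(x-1)^2 > 0" using y by simp
  have x2p: "x^2 > 0" using x2 by simp
  have inv: "1/x^2 \<le> 1/(x-1)^2"
    by (rule divide_left_mono) (use sq y2 x2p mult_pos_pos[OF x2p y2] in auto)
  have t1: "1/(12 * x^2) \<le> 2/(16*(x-1)^2)"
  proof -
    have "1/(12 * x^2) = (1/12) * (1/x^2)" by simp
    also have "\<dots> \<le> (1/12) * (1/(x-1)^2)" using inv by simp
    also have "\<dots> \<le> (2/16) * (1/(x-1)^2)" by (intro mult_right_mono) (use y2 in auto)
    also have "\<dots> = 2/(16*(x-1)^2)" by simp
    finally show ?thesis .
  qed
  have t2: "(real k + 1) * ee N < (real k + 1) / (16*(x-1)^2)"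
  proof -
    have "(real k + 1) * ee N < (real k + 1) * (1/(16 * x^2))"
      using eN by (intro mult_strict_left_mono) auto
    also have "\<dots> \<le> (real k + 1) / (16*(x-1)^2)"
    proof -
      have "(real k + 1) * (1/(16 * x^2)) = ((real k + 1)/16) * (1/x^2)" by simp
      also have "\<dots> \<le> ((real k + 1)/16) * (1/(x-1)^2)" using inv by (intro mult_left_mono) auto
      also have "\<dots> = (real k + 1) / (16*(x-1)^2)" by simp
      finally show ?thesis .
    qed
    finally show ?thesis .
  qed
  have t3: "0 < (1/(x-1)) / (16*(x-1)^2)" using y by simp
  have "euler_mascheroni - (\<Sum>j=1..N. a_seq j) < 2/(16*(x-1)^2) + (real k + 1) / (16*(x-1)^2) + (1/(x-1)) / (16*(x-1)^2)"
    unfolding diff using R2 t1 t2 t3 by linarith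
  also have "\<dots> = (2 + of_int (nu (N - 1)) + 1 / real (N - 1)) / (16 * (real N - 1)^2)"
    unfolding xm nu by (simp add: add_divide_distrib)
  finally show ?thesis .
qed

end
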